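(* Under the standing setup, let $(v^k)$ be generated by Algorithm U. (1) If $K$ has at least two distinct eigenvalues, then: (i) almost surely $v^0$ is not a generalized eigenvector of $(A^TA,B^TB)$; (ii) if moreover $\dim G_{\lambda_1}=d-1$, then $v^1\in G_{\lambda_1}$ almost surely; (iii) for every $k\ge0$ and every generalized eigenvalue $\lambda$ with $\dim G_\lambda<d-1$, $\mathbb P\bigl(v^k\notin G_\lambda,\ v^{k+1}\in G_\lambda\bigr)=0$. (2) If $K$ has only one distinct eigenvalue, then $v^0\in G_{\lambda_1}$.
   Context: Standing setup. Let $d\ge 2$, $A\in\mathbb R^{m\times d}$, $B\in\mathbb R^{\ell\times d}$ with $\ker B=\{0\}$, so $B^TB$ is symmetric positive definite. $\mathbb S^{d-1}$ is the Euclidean unit sphere of $\mathbb R^d$ and $\mathcal U(\mathbb S^{d-1})$ the uniform (normalized surface) probability measure on it. Define $f(v)=\|Av\|^2/\|Bv\|^2$ for $v\neq0$. A generalized eigenvector of $(A^TA,B^TB)$ is a vector $v\neq 0$ with $A^TAv=\lambda B^TBv$ for some $\lambda\in\mathbb R$ (a generalized eigenvalue); the generalized eigenvalues are exactly the eigenvalues of the symmetric matrix $K=(B^TB)^{-1/2}A^TA(B^TB)^{-1/2}$, listed with multiplicity as $\lambda_1\ge\lambda_2\ge\dots\ge\lambda_d$. For a generalized eigenvalue $\lambda$ let $G_\lambda=\{v\in\mathbb R^d\setminus\{0\}: A^TAv=\lambda B^TBv\}$, and $\dim G_\lambda$ denotes the dimension of the linear subspace $G_\lambda\cup\{0\}$.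 Algorithm U. Let $g\sim\mathcal N(0,I_d)$ and $v^0=g/\|g\|$; let $x^0,x^1,x^2,\dots$ be i.i.d. with law $\mathcal U(\mathbb S^{d-1})$, independent of $g$. Given $v^k\in\mathbb S^{d-1}$, set $s_k(\tau)=f(v^k+\tau x^k)$ for $\tau\in\mathbb R$ with $v^k+\tau x^k\neq0$; let $\tau_k$ be a (measurably chosen) maximizer of $s_k$ over $\tau\in\mathbb R$, with $\tau_k=0$ if no maximizer exists, and set $v^{k+1}=(v^k+\tau_kx^k)/\|v^k+\tau_kx^k\|$. *)

theory Defs
  imports "HOL-Analysis.Analysis" "HOL-Probability.Probability"
begin

definition rq :: "real^'n^'m \<Rightarrow> real^'n^'l \<Rightarrow> real^'n \<Rightarrow> real" where
  "rq A B v = (norm (A *v v))\<^sup>2 / (norm (B *v v))\<^sup>2"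

definition psd_sqrt :: "real^'n^'n \<Rightarrow> real^'n^'n" where
  "psd_sqrt M = (THE S. transpose S = S \<and> (\<forall>x. 0 \<le> x \<bullet> (S *v x)) \<and> S ** S = M)"

definition Kmat :: "real^'n^'m \<Rightarrow> real^'n^'l \<Rightarrow> real^'n^'n" where
  "Kmat A B = (let R = matrix_inv (psd_sqrt (transpose B ** B))
               in (R ** (transpose A ** A)) ** R)"

definition eigenvalues :: "real^'n^'n \<Rightarrow> real set" where
  "eigenvalues K = {c. \<exists>v. v \<noteq> 0 \<and> K *v v = c *\<^sub>R v}"

definition lambda1 :: "real^'n^'m \<Rightarrow> real^'n^'l \<Rightarrow> real" where
  "lambda1 A B = Max (eigenvalues (Kmat A B))"

definition Gset :: "real^'n^'m \<Rightarrow> real^'n^'l \<Rightarrow> real \<Rightarrow> (real^'n) set" where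
  "Gset A B c = {v. v \<noteq> 0 \<and> (transpose A ** A) *v v = c *\<^sub>R ((transpose B ** B) *v v)}"

definition dimG :: "real^'n^'m \<Rightarrow> real^'n^'l \<Rightarrow> real \<Rightarrow> nat" where
  "dimG A B c = dim (insert 0 (Gset A B c))"

definition gen_eigvec :: "real^'n^'m \<Rightarrow> real^'n^'l \<Rightarrow> real^'n \<Rightarrow> bool" where
  "gen_eigvec A B v \<longleftrightarrow> (\<exists>c. v \<in> Gset A B c)"

definition std_gauss :: "(real^'n) measure" where
  "std_gauss = density lborel
     (\<lambda>y. ennreal ((2 * pi) powr (- real CARD('n) / 2) * exp (- (norm y)\<^sup>2 / 2)))"

text \<open>Uniform (normalized surface) probability measure on the unit sphere, realised as the
  cone measure: U(S) = Lebesgue measure of {y in the unit ball : y/|y| in S} divided by the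
  volume of the unit ball.\<close>
definition unif_sphere :: "(real^'n) measure" where
  "unif_sphere = distr (uniform_measure lborel (ball 0 1)) borel (\<lambda>y. (1 / norm y) *\<^sub>R y)"

definition is_max_selector :: "real^'n^'m \<Rightarrow> real^'n^'l \<Rightarrow> (real^'n \<Rightarrow> real^'n \<Rightarrow> real) \<Rightarrow> bool" where
  "is_max_selector A B sel \<longleftrightarrow>
     (\<forall>v \<in> sphere 0 1. \<forall>x \<in> sphere 0 1.
        (if (\<exists>\<tau>. v + \<tau> *\<^sub>R x \<noteq> 0 \<and>
                 (\<forall>\<sigma>. v + \<sigma> *\<^sub>R x \<noteq> 0 \<longrightarrow> rq A B (v + \<sigma> *\<^sub>R x) \<le> rq A B (v + \<tau> *\<^sub>R x)))
         then v + sel v x *\<^sub>R x \<noteq> 0 \<and>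
              (\<forall>\<sigma>. v + \<sigma> *\<^sub>R x \<noteq> 0 \<longrightarrow> rq A B (v + \<sigma> *\<^sub>R x) \<le> rq A B (v + sel v x *\<^sub>R x))
         else sel v x = 0))"

fun algU :: "(real^'n \<Rightarrow> real^'n \<Rightarrow> real) \<Rightarrow> real^'n \<Rightarrow> (nat \<Rightarrow> real^'n) \<Rightarrow> nat \<Rightarrow> real^'n" where
  "algU sel g xs 0 = (1 / norm g) *\<^sub>R g"
| "algU sel g xs (Suc k) =
     (let v = algU sel g xs k; w = v + sel v (xs k) *\<^sub>R xs k in (1 / norm w) *\<^sub>R w)"

end

theory Submission
  imports Defs
begin

lemma sym_inner:
  fixes M :: "real^'n^'n"
  assumes "transpose M = M"
  shows "x \<bullet> (M *v y) = (M *v x) \<bullet> y"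
  by (metis assms dot_lmul_matrix transpose_matrix_vector)

lemma quad_zero:
  fixes a c :: real
  assumes "\<And>t. 2*t*a + t^2*c \<le> 0"
  shows "a = 0"
proof (rule ccontr)
  assume "a \<noteq> 0"
  define kk where "kk = \<bar>c\<bar> + 1"
  define t where "t = a / kk"
  have pos: "kk > 0" by (simp add: kk_def)
  have a_eq: "a = t * kk" using pos by (simp add: t_def)
  have "2*t*a + t^2*c \<le> 0" by (rule assms)
  then have "(2*t*a + t^2*c) * kk^2 \<le> 0"
    by (simp add: mult_nonpos_nonneg)
  also have "(2*t*a + t^2*c) * kk^2 = a^2 * (2*kk + c)"
    by (simp add: a_eq power2_eq_square algebra_simps)
  finally have "a^2 * (2*kk + c) \<le> 0" .
  moreover have "a^2 > 0" using \<open>a \<noteq> 0\<close> by simp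
  moreover have "2*kk + c > 0" unfolding kk_def by (cases "c \<ge> 0") auto
  ultimately show False by (simp add: mult_le_0_iff)
qed

lemma eig_in_subspace:
  fixes M :: "real^'n^'n"
  assumes sym: "transpose M = M" and W: "subspace W" and nz: "w \<in> W" "w \<noteq> 0"
    and inv: "\<And>z. z \<in> W \<Longrightarrow> M *v z \<in> W"
  shows "\<exists>v\<in>W. norm v = 1 \<and> (\<exists>\<mu>. M *v v = \<mu> *\<^sub>R v)"
proof -
  let ?S = "W \<inter> sphere 0 1"
  have cpt: "compact ?S" using closed_subspace[OF W] compact_sphere by (rule closed_Int_compact)
  have ne: "(1/norm w) *\<^sub>R w \<in> ?S" using W nz by (simp add: subspace_scale)
  have cont: "continuous_on ?S (\<lambda>y. y \<bullet> (M *v y))"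
    by (intro continuous_on_inner continuous_on_id matrix_vector_mult_linear_continuous_on)
  obtain y0 where y0: "y0 \<in> ?S" "\<forall>y\<in>?S. y \<bullet> (M*v y) \<le> y0 \<bullet> (M *v y0)"
    using continuous_attains_sup[OF cpt _ cont] ne by blast
  define m where "m = y0 \<bullet> (M *v y0)"
  have y0n: "y0 \<bullet> y0 = 1" using y0(1) by (simp add: power2_norm_eq_inner[symmetric])
  have bound: "u \<bullet> (M *v u) \<le> m * (norm u)^2" if u: "u \<in> W" for u
  proof (cases "u = 0")
    case True then show ?thesis by simp
  next
    case False
    let ?y = "(1/norm u) *\<^sub>R u"
    have "?y \<in> ?S" using u False W by (simp add: subspace_scale)
    then have "?y \<bullet> (M *v ?y) \<le> m" using y0 m_def by blast
    also have "?y \<bullet> (M *v ?y) = (u \<bullet> (M *v u)) / (norm u)^2"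
      by (simp add: matrix_vector_mult_scaleR power2_eq_square)
    finally show ?thesis using False by (simp add: divide_le_eq)
  qed
  have orth: "z \<bullet> (M *v y0 - m *\<^sub>R y0) = 0" if z: "z \<in> W" for z
  proof -
    let ?a = "z \<bullet> (M *v y0 - m *\<^sub>R y0)"
    let ?c = "z \<bullet> (M *v z) - m * (z \<bullet> z)"
    have "2*t*?a + t^2*?c \<le> 0" for t
    proof -
      have inW: "y0 + t *\<^sub>R z \<in> W" using y0 z W by (simp add: subspace_add subspace_scale)
      have sy: "y0 \<bullet> (M *v z) = z \<bullet> (M *v y0)"
        using sym_inner[OF sym, of y0 z] by (simp add: inner_commute)
      have "(y0 + t *\<^sub>R z) \<bullet> (M *v (y0 + t *\<^sub>R z)) \<le> m * (norm (y0 + t *\<^sub>R z))^2"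
        by (rule bound[OF inW])
      also have "(norm (y0 + t *\<^sub>R z))^2 = (y0 + t *\<^sub>R z) \<bullet> (y0 + t *\<^sub>R z)"
        by (simp add: power2_norm_eq_inner)
      finally have "(y0 + t *\<^sub>R z) \<bullet> (M *v (y0 + t *\<^sub>R z)) \<le> m * ((y0 + t *\<^sub>R z) \<bullet> (y0 + t *\<^sub>R z))" .
      then have "m + 2*t*(z \<bullet> (M *v y0)) + t^2 * (z \<bullet> (M *v z)) \<le> m * (1 + 2*t*(z \<bullet> y0) + t^2 * (z \<bullet> z))"
        using sy y0n unfolding m_def
        by (simp add: matrix_vector_right_distrib matrix_vector_mult_scaleR inner_add_left inner_add_right
            inner_commute power2_eq_square algebra_simps)
      then show ?thesis by (simp add: inner_diff_right algebra_simps)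
    qed
    then show ?thesis by (rule quad_zero)
  qed
  have inW2: "M *v y0 - m *\<^sub>R y0 \<in> W" using inv W y0 by (simp add: subspace_diff subspace_scale)
  have "M *v y0 - m *\<^sub>R y0 = 0" using orth[OF inW2] by simp
  then have "M *v y0 = m *\<^sub>R y0" by simp
  then show ?thesis using y0 by auto
qed

lemma spectral:
  fixes M :: "real^'n^'n"
  assumes sym: "transpose M = M"
  shows "\<exists>E. finite E \<and> pairwise orthogonal E \<and> (\<forall>b\<in>E. norm b = 1 \<and> (\<exists>\<mu>. M *v b = \<mu> *\<^sub>R b)) \<and> span E = UNIV"
proof -
  define P where "P E \<longleftrightarrow> finite E \<and> pairwise orthogonal E \<and> (\<forall>b\<in>E. norm b = 1 \<and> (\<exists>\<mu>. M *v b = \<mu> *\<^sub>R b))" for E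
  have ind: "independent E" if "P E" for E
    using that by (intro pairwise_orthogonal_independent) (auto simp: P_def)
  have step: "n \<le> CARD('n) \<Longrightarrow> \<exists>E. P E \<and> card E = n" for n
  proof (induction n)
    case 0 show ?case by (intro exI[of _ "{}"]) (simp add: P_def)
  next
    case (Suc n)
    then obtain E where E: "P E" "card E = n" by auto
    have "dim E < DIM(real^'n)" using dim_eq_card_independent[OF ind[OF E(1)]] E Suc.prems by simp
    then obtain x where x: "x \<noteq> 0" "\<And>y. y \<in> span E \<Longrightarrow> orthogonal x y" by (rule orthogonal_to_subspace_exists) auto
    let ?W = "{y. \<forall>e\<in>E. orthogonal e y}"
    have sub: "subspace ?W" by (rule subspace_orthogonal_to_vectors)
    have xW: "x \<in> ?W" using x span_base by (auto simp: orthogonal_commute)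
    have inv: "M *v z \<in> ?W" if z: "z \<in> ?W" for z
    proof (clarsimp)
      fix e assume e: "e \<in> E"
      then obtain \<mu> where mu: "M *v e = \<mu> *\<^sub>R e" using E(1) by (auto simp: P_def)
      have "e \<bullet> (M *v z) = (M *v e) \<bullet> z" by (rule sym_inner[OF sym])
      also have "\<dots> = \<mu> * (e \<bullet> z)" by (simp add: mu)
      also have "e \<bullet> z = 0" using z e by (auto simp: orthogonal_def)
      finally show "orthogonal e (M *v z)" by (simp add: orthogonal_def)
    qed
    obtain v where v: "v \<in> ?W" "norm v = 1" "\<exists>\<mu>. M *v v = \<mu> *\<^sub>R v"
      using eig_in_subspace[OF sym sub xW x(1) inv] by blast
    have vE: "v \<notin> E"
    proof
      assume "v \<in> E" then have "orthogonal v v" using v(1) by auto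
      then show False using v(2) by (simp add: orthogonal_def)
    qed
    have "P (insert v E)"
      using E(1) v vE unfolding P_def by (auto simp: pairwise_insert orthogonal_commute)
    moreover have "card (insert v E) = Suc n" using E vE by (simp add: P_def)
    ultimately show ?case by blast
  qed
  obtain E where E: "P E" "card E = CARD('n)" using step by auto
  have "dim E = DIM(real^'n)" using dim_eq_card_independent[OF ind[OF E(1)]] E by simp
  then have "span E = UNIV" using dim_eq_full[of E] by simp
  then show ?thesis using E(1) unfolding P_def by blast
qed

lemma eigbasis:
  fixes M :: "real^'n^'n"
  assumes sym: "transpose M = M"
  obtains E mu where "finite E" "\<And>b b'. b \<in> E \<Longrightarrow> b' \<in> E \<Longrightarrow> b \<bullet> b' = (if b = b' then 1 else 0)"
    "\<And>b. b \<in> E \<Longrightarrow> M *v b = mu b *\<^sub>R b" "\<And>x. (\<Sum>b\<in>E. (x \<bullet> b) *\<^sub>R b) = x"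
proof -
  obtain E where E: "finite E" "pairwise orthogonal E" "\<forall>b\<in>E. norm b = 1 \<and> (\<exists>\<mu>. M *v b = \<mu> *\<^sub>R b)" "span E = UNIV"
    using spectral[OF sym] by blast
  then obtain mu where mu: "\<And>b. b \<in> E \<Longrightarrow> M *v b = mu b *\<^sub>R b" by metis
  have on: "b \<bullet> b' = (if b = b' then 1 else 0)" if "b \<in> E" "b' \<in> E" for b b'
  proof (cases "b = b'")
    case True then show ?thesis using E(3) that by (simp add: norm_eq_1)
  next
    case False then show ?thesis using E(2) that by (auto simp: pairwise_def orthogonal_def)
  qed
  have ex: "(\<Sum>b\<in>E. (x \<bullet> b) *\<^sub>R b) = x" for x
    using E by (intro orthonormal_basis_expand) auto
  show ?thesis using that[OF E(1) on mu ex] by blast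
qed

lemma delta_sum:
  assumes "finite E" "\<And>b b'. b \<in> E \<Longrightarrow> b' \<in> E \<Longrightarrow> b \<bullet> b' = (if b = b' then 1 else 0)" "b0 \<in> E"
  shows "(\<Sum>b\<in>E. c b * (b0 \<bullet> b)) = (c b0 :: real)"
proof -
  have "(\<Sum>b\<in>E. c b * (b0 \<bullet> b)) = (\<Sum>b\<in>E. if b0 = b then c b else 0)"
    using assms by (intro sum.cong) auto
  also have "\<dots> = c b0" using assms by simp
  finally show ?thesis .
qed

lemma sym_from_inner:
  fixes T :: "real^'n^'n"
  assumes "\<And>x y. x \<bullet> (T *v y) = (T *v x) \<bullet> y"
  shows "transpose T = T"
proof (rule matrix_eq[THEN iffD2], rule allI)
  fix y
  have "x \<bullet> (transpose T *v y - T *v y) = 0" for x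
  proof -
    have "x \<bullet> (transpose T *v y) = (y v* T) \<bullet> x" by (simp add: inner_commute)
    also have "\<dots> = y \<bullet> (T *v x)" by (rule dot_lmul_matrix)
    also have "\<dots> = x \<bullet> (T *v y)" using assms[of x y] by (simp add: inner_commute)
    finally show ?thesis by (simp add: inner_diff_right)
  qed
  from this[of "transpose T *v y - T *v y"] show "transpose T *v y = T *v y" by simp
qed

lemma psd_sqrt_props:
  fixes N :: "real^'n^'n"
  assumes sym: "transpose N = N" and psd: "\<And>x. 0 \<le> x \<bullet> (N *v x)"
  shows "transpose (psd_sqrt N) = psd_sqrt N \<and> (\<forall>x. 0 \<le> x \<bullet> (psd_sqrt N *v x)) \<and> psd_sqrt N ** psd_sqrt N = N"
proof -
  obtain E mu where E: "finite E" and on: "\<And>b b'. b \<in> E \<Longrightarrow> b' \<in> E \<Longrightarrow> b \<bullet> b' = (if b = b' then 1 else 0)"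
    and mu: "\<And>b. b \<in> E \<Longrightarrow> N *v b = mu b *\<^sub>R b" and ex: "\<And>x. (\<Sum>b\<in>E. (x \<bullet> b) *\<^sub>R b) = x"
    by (rule eigbasis[OF sym]) blast
  have mu_nn: "mu b \<ge> 0" if "b \<in> E" for b
    using psd[of b] mu[OF that] on[OF that that] by simp
  define Q where "Q T \<longleftrightarrow> transpose T = T \<and> (\<forall>x. 0 \<le> x \<bullet> (T *v x)) \<and> T ** T = N" for T :: "real^'n^'n"
  define f where "f x = (\<Sum>b\<in>E. (sqrt (mu b) * (x \<bullet> b)) *\<^sub>R b)" for x
  have lin: "linear f"
    unfolding f_def linear_iff
    by (auto simp: inner_add_left scaleR_add_left sum.distrib algebra_simps scaleR_sum_right)
  define S0 where "S0 = matrix f"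
  have S0v: "S0 *v x = f x" for x
    unfolding S0_def using lin by (simp add: matrix_works linear_matrix_vector_mul_eq)
  have fb: "f b0 = sqrt (mu b0) *\<^sub>R b0" if "b0 \<in> E" for b0
  proof -
    have "f b0 = (\<Sum>b\<in>E. if b = b0 then sqrt (mu b) *\<^sub>R b else 0)"
      unfolding f_def
    proof (rule sum.cong[OF refl])
      fix b assume bE: "b \<in> E"
      have "b0 \<bullet> b = (if b0 = b then 1 else 0)" using on[OF that bE] .
      then show "(sqrt (mu b) * (b0 \<bullet> b)) *\<^sub>R b = (if b = b0 then sqrt (mu b) *\<^sub>R b else 0)"
        by (cases "b = b0") auto
    qed
    also have "\<dots> = sqrt (mu b0) *\<^sub>R b0"
      using sum.delta[OF E, of b0 "\<lambda>b. sqrt (mu b) *\<^sub>R b"] that by simp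
    finally show ?thesis .
  qed
  have f_inner: "x \<bullet> f y = (\<Sum>b\<in>E. sqrt (mu b) * (y \<bullet> b) * (x \<bullet> b))" for x y
    unfolding f_def by (simp add: inner_sum_right algebra_simps)
  have QS0: "Q S0"
    unfolding Q_def
  proof (intro conjI allI)
    show "transpose S0 = S0"
      by (rule sym_from_inner) (simp add: S0v f_inner inner_commute[of "f _"] mult.commute mult.left_commute)
    fix x show "0 \<le> x \<bullet> (S0 *v x)"
      unfolding S0v f_inner using mu_nn by (auto intro!: sum_nonneg simp: mult.assoc)
  next
    show "S0 ** S0 = N"
    proof (rule matrix_eq[THEN iffD2], rule allI)
      fix x
      have "(S0 ** S0) *v x = f (f x)" by (simp add: matrix_vector_mul_assoc[symmetric] S0v)
      also have "f (f x) = (\<Sum>b\<in>E. (sqrt (mu b) * (x \<bullet> b)) *\<^sub>R f b)"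
        unfolding f_def[of x] by (simp add: linear_sum[OF lin] linear_scale[OF lin])
      also have "\<dots> = (\<Sum>b\<in>E. (x \<bullet> b) *\<^sub>R (mu b *\<^sub>R b))"
        using mu_nn by (intro sum.cong) (auto simp: fb)
      also have "\<dots> = N *v x"
        by (subst (2) ex[of x, symmetric]) (simp add: vec.sum matrix_vector_mult_scaleR mu)
      finally show "(S0 ** S0) *v x = N *v x" .
    qed
  qed
  have uniq: "T = S0" if QT: "Q T" for T
  proof -
    have Tsym: "transpose T = T" and Tpsd: "\<And>x. 0 \<le> x \<bullet> (T *v x)" and TT: "T ** T = N"
      using QT by (auto simp: Q_def)
    have TTv: "T *v (T *v x) = N *v x" for x using TT by (simp add: matrix_vector_mul_assoc)
    have Tb: "T *v b = sqrt (mu b) *\<^sub>R b" if b: "b \<in> E" for b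
    proof -
      define sq where "sq = sqrt (mu b)"
      have sq2: "sq * sq = mu b" using mu_nn[OF b] by (simp add: sq_def)
      have sq0: "sq \<ge> 0" using mu_nn[OF b] by (simp add: sq_def)
      show ?thesis
      proof (cases "sq = 0")
        case True
        then have "mu b = 0" using sq2 by simp
        have "(T *v b) \<bullet> (T *v b) = b \<bullet> (T *v (T *v b))" using sym_inner[OF Tsym, of b "T *v b"] by simp
        also have "\<dots> = 0" using TTv mu[OF b] \<open>mu b = 0\<close> by simp
        finally show ?thesis using True by (simp add: sq_def)
      next
        case False
        define w where "w = T *v b - sq *\<^sub>R b"
        have "T *v w = - sq *\<^sub>R w"
          unfolding w_def using TTv[of b] mu[OF b] sq2
          by (simp add: matrix_vector_right_distrib[symmetric] algebra_simps matrix_vector_mult_scaleR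
               vec.diff scaleR_diff_right)
        then have "w \<bullet> (T *v w) = - sq * (w \<bullet> w)" by simp
        with Tpsd[of w] have "sq * (w \<bullet> w) \<le> 0" by simp
        then have "w \<bullet> w \<le> 0" using False sq0 by (simp add: mult_le_0_iff)
        then have "w = 0" using inner_ge_zero[of w] by simp
        then show ?thesis by (simp add: w_def sq_def)
      qed
    qed
    show ?thesis
    proof (rule matrix_eq[THEN iffD2], rule allI)
      fix x
      have "T *v x = T *v (\<Sum>b\<in>E. (x \<bullet> b) *\<^sub>R b)" by (simp add: ex)
      also have "\<dots> = (\<Sum>b\<in>E. (x \<bullet> b) *\<^sub>R (sqrt (mu b) *\<^sub>R b))"
        by (simp add: vec.sum matrix_vector_mult_scaleR Tb cong: sum.cong)
      also have "\<dots> = f x" unfolding f_def by (simp add: mult.commute)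
      finally show "T *v x = S0 *v x" by (simp add: S0v)
    qed
  qed
  have "psd_sqrt N = S0"
    unfolding psd_sqrt_def
  proof (rule the_equality)
    show "transpose S0 = S0 \<and> (\<forall>x. 0 \<le> x \<bullet> (S0 *v x)) \<and> S0 ** S0 = N" using QS0 by (simp add: Q_def)
  next
    fix T assume "transpose T = T \<and> (\<forall>x. 0 \<le> x \<bullet> (T *v x)) \<and> T ** T = N"
    then show "T = S0" by (intro uniq) (simp add: Q_def)
  qed
  then show ?thesis using QS0 unfolding Q_def by simp
qed

lemma subspace_null_lborel:
  fixes W :: "(real^'n) set"
  assumes W: "subspace W" and d: "dim W < CARD('n)"
  shows "W \<in> null_sets lborel"
proof -
  have "negligible W" using d by (intro negligible_lowdim) simp
  then have "W \<in> null_sets lebesgue" by (simp add: negligible_iff_null_sets)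
  moreover have "W \<in> sets lborel" using closed_subspace[OF W] by simp
  ultimately show ?thesis using null_sets_completion_iff by blast
qed

lemma std_gauss_null:
  fixes W :: "(real^'n) set"
  assumes W: "subspace W" and d: "dim W < CARD('n)"
  shows "emeasure std_gauss W = 0"
proof -
  have "W \<in> null_sets lborel" by (rule subspace_null_lborel[OF W d])
  then have "W \<in> null_sets std_gauss"
    unfolding std_gauss_def
    by (subst null_sets_density_iff) (auto intro: AE_I' simp: null_sets_def)
  then show ?thesis by auto
qed

lemma normalize_meas: "(\<lambda>y::real^'n. (1 / norm y) *\<^sub>R y) \<in> borel_measurable borel"
  by measurable

lemma unif_sphere_null:
  fixes W :: "(real^'n) set"
  assumes W: "subspace W" and d: "dim W < CARD('n)" and A: "A \<in> sets borel"
    and sub: "\<And>y. y \<noteq> 0 \<Longrightarrow> (1 / norm y) *\<^sub>R y \<in> A \<Longrightarrow> y \<in> W"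
  shows "emeasure unif_sphere A = 0"
proof -
  let ?U = "uniform_measure lborel (ball (0::real^'n) 1)"
  have sp: "space ?U = UNIV" by simp
  have "emeasure unif_sphere A = emeasure ?U ((\<lambda>y. (1 / norm y) *\<^sub>R y) -` A \<inter> space ?U)"
    unfolding unif_sphere_def using A by (intro emeasure_distr) (auto simp: normalize_meas)
  also have "\<dots> \<le> emeasure ?U W"
  proof (rule emeasure_mono)
    show "(\<lambda>y. (1 / norm y) *\<^sub>R y) -` A \<inter> space ?U \<subseteq> W"
      using sub subspace_0[OF W] by (auto simp: sp) (metis)
    show "W \<in> sets ?U" using closed_subspace[OF W] by simp
  qed
  also have "emeasure ?U W = emeasure lborel (ball 0 1 \<inter> W) / emeasure lborel (ball (0::real^'n) 1)"
    using closed_subspace[OF W] by (intro emeasure_uniform_measure) auto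
  also have "emeasure lborel (ball 0 1 \<inter> W) = 0"
  proof -
    have "W \<in> null_sets lborel" by (rule subspace_null_lborel[OF W d])
    have "emeasure lborel (ball 0 1 \<inter> W) \<le> emeasure lborel W"
      using closed_subspace[OF W] by (intro emeasure_mono) auto
    then show ?thesis using \<open>W \<in> null_sets lborel\<close> by auto
  qed
  finally show ?thesis by simp
qed

lemma inner_transpose:
  fixes B :: "real^'n^'m"
  shows "x \<bullet> (transpose B *v y) = (B *v x) \<bullet> y"
  by (metis dot_lmul_matrix inner_commute transpose_matrix_vector)

lemma inner_vmul:
  fixes B :: "real^'n^'m"
  shows "x \<bullet> (y v* B) = (B *v x) \<bullet> y"
  by (metis dot_lmul_matrix inner_commute)

context
  fixes A :: "real^'n^'m" and B :: "real^'n^'l"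
  assumes kerB: "\<forall>v. B *v v = 0 \<longrightarrow> v = 0"
begin

definition "QQ = transpose A ** A"
definition "NN = transpose B ** B"
definition "SS = psd_sqrt NN"
definition "RR = matrix_inv SS"

lemma KK_def: "Kmat A B = (RR ** QQ) ** RR"
  unfolding Kmat_def RR_def SS_def NN_def QQ_def Let_def by simp

lemma QQv: "x \<bullet> (QQ *v x) = (norm (A *v x))^2"
  unfolding QQ_def by (simp add: matrix_vector_mul_assoc[symmetric] inner_vmul power2_norm_eq_inner)

lemma NNv: "x \<bullet> (NN *v x) = (norm (B *v x))^2"
  unfolding NN_def by (simp add: matrix_vector_mul_assoc[symmetric] inner_vmul power2_norm_eq_inner)

lemma QQ_sym: "transpose QQ = QQ"
  unfolding QQ_def by (simp add: matrix_transpose_mul)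

lemma NN_sym: "transpose NN = NN"
  unfolding NN_def by (simp add: matrix_transpose_mul)

lemma SS_props: "transpose SS = SS" "\<And>x. 0 \<le> x \<bullet> (SS *v x)" "SS ** SS = NN"
  using psd_sqrt_props[OF NN_sym] NNv unfolding SS_def by auto

lemma SSSS: "SS *v (SS *v x) = NN *v x"
  by (simp add: matrix_vector_mul_assoc SS_props(3))

lemma SS_inj: "SS *v x = 0 \<Longrightarrow> x = 0"
proof -
  assume "SS *v x = 0"
  then have "NN *v x = 0" using SSSS[of x] by simp
  then have "(norm (B *v x))^2 = 0" using NNv[of x] by simp
  then show "x = 0" using kerB by simp
qed

lemma RR_inv: "SS ** RR = mat 1" "RR ** SS = mat 1"
proof -
  have "inj ((*v) SS)"
  proof (rule injI)
    fix x y assume "SS *v x = SS *v y"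
    then have "SS *v (x - y) = 0" by (simp add: matrix_vector_mult_diff_distrib)
    then show "x = y" using SS_inj by force
  qed
  then obtain L where L: "L ** SS = mat 1" using matrix_left_invertible_injective by blast
  then have "SS ** L = mat 1" using matrix_left_right_inverse by blast
  with L have "\<exists>A'. SS ** A' = mat 1 \<and> A' ** SS = mat 1" by blast
  then have "SS ** RR = mat 1 \<and> RR ** SS = mat 1"
    unfolding RR_def matrix_inv_def by (rule someI_ex)
  then show "SS ** RR = mat 1" "RR ** SS = mat 1" by auto
qed

lemma RRSS: "RR *v (SS *v x) = x" "SS *v (RR *v x) = x"
  by (simp_all add: matrix_vector_mul_assoc RR_inv)

lemma RR_sym: "transpose RR = RR"
proof -
  have "transpose RR ** SS = mat 1"
    using arg_cong[OF RR_inv(1), of transpose] SS_props(1) by (simp add: matrix_transpose_mul transpose_mat)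
  then have "transpose RR = transpose RR ** (SS ** RR)" by (simp add: RR_inv)
  also have "\<dots> = RR" by (simp add: matrix_mul_assoc \<open>transpose RR ** SS = mat 1\<close>)
  finally show ?thesis .
qed

lemma KK_sym: "transpose (Kmat A B) = Kmat A B"
  unfolding KK_def by (simp add: matrix_transpose_mul RR_sym QQ_sym matrix_mul_assoc)

lemma KK_SS: "Kmat A B *v (SS *v v) = RR *v (QQ *v v)"
  unfolding KK_def by (simp add: matrix_vector_mul_assoc[symmetric] RRSS)

lemma Gset_iff: "v \<in> Gset A B c \<longleftrightarrow> v \<noteq> 0 \<and> Kmat A B *v (SS *v v) = c *\<^sub>R (SS *v v)"
proof -
  have "QQ *v v = c *\<^sub>R (NN *v v) \<longleftrightarrow> RR *v (QQ *v v) = c *\<^sub>R (SS *v v)"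
  proof
    assume "QQ *v v = c *\<^sub>R (NN *v v)"
    then have "RR *v (QQ *v v) = c *\<^sub>R (RR *v (SS *v (SS *v v)))" by (simp add: SSSS matrix_vector_mult_scaleR)
    then show "RR *v (QQ *v v) = c *\<^sub>R (SS *v v)" by (simp add: RRSS)
  next
    assume "RR *v (QQ *v v) = c *\<^sub>R (SS *v v)"
    then have "SS *v (RR *v (QQ *v v)) = c *\<^sub>R (SS *v (SS *v v))" by (simp add: matrix_vector_mult_scaleR)
    then show "QQ *v v = c *\<^sub>R (NN *v v)" by (simp add: RRSS SSSS)
  qed
  then show ?thesis unfolding Gset_def QQ_def[symmetric] NN_def[symmetric] by (simp add: KK_SS)
qed

lemma eig_iff: "c \<in> eigenvalues (Kmat A B) \<longleftrightarrow> Gset A B c \<noteq> {}"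
proof
  assume "c \<in> eigenvalues (Kmat A B)"
  then obtain y where y: "y \<noteq> 0" "Kmat A B *v y = c *\<^sub>R y" by (auto simp: eigenvalues_def)
  have "RR *v y \<noteq> 0" using y(1) RRSS(2)[of y] by auto
  then have "RR *v y \<in> Gset A B c" using y by (simp add: Gset_iff RRSS)
  then show "Gset A B c \<noteq> {}" by blast
next
  assume "Gset A B c \<noteq> {}"
  then obtain v where "v \<in> Gset A B c" by blast
  then have "v \<noteq> 0" "Kmat A B *v (SS *v v) = c *\<^sub>R (SS *v v)" by (auto simp: Gset_iff)
  moreover have "SS *v v \<noteq> 0" using SS_inj \<open>v \<noteq> 0\<close> by blast
  ultimately show "c \<in> eigenvalues (Kmat A B)" by (auto simp: eigenvalues_def)
qed

lemma rq_KK: "rq A B v = ((SS *v v) \<bullet> (Kmat A B *v (SS *v v))) / ((SS *v v) \<bullet> (SS *v v))"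
proof -
  have "(SS *v v) \<bullet> (Kmat A B *v (SS *v v)) = (norm (A *v v))^2"
    using sym_inner[OF RR_sym, of "SS *v v" "QQ *v v"] by (simp add: KK_SS RRSS QQv)
  moreover have "(SS *v v) \<bullet> (SS *v v) = (norm (B *v v))^2"
    using sym_inner[OF SS_props(1), of "SS *v v" v] by (simp add: SSSS NNv inner_commute)
  ultimately show ?thesis by (simp add: rq_def)
qed

end

lemma sym_expansions:
  fixes M :: "real^'n^'n"
  assumes E: "finite E" and on: "\<And>b b'. b \<in> E \<Longrightarrow> b' \<in> E \<Longrightarrow> b \<bullet> b' = (if b = b' then 1 else 0)"
    and mu: "\<And>b. b \<in> E \<Longrightarrow> M *v b = mu b *\<^sub>R b" and ex: "\<And>x. (\<Sum>b\<in>E. (x \<bullet> b) *\<^sub>R b) = x"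
  shows "M *v y = (\<Sum>b\<in>E. (mu b * (y \<bullet> b)) *\<^sub>R b)"
    and "y \<bullet> (M *v y) = (\<Sum>b\<in>E. mu b * (y \<bullet> b)^2)"
    and "y \<bullet> y = (\<Sum>b\<in>E. (y \<bullet> b)^2)"
proof -
  have "M *v y = M *v (\<Sum>b\<in>E. (y \<bullet> b) *\<^sub>R b)" by (simp add: ex)
  also have "\<dots> = (\<Sum>b\<in>E. (mu b * (y \<bullet> b)) *\<^sub>R b)"
    by (simp add: vec.sum matrix_vector_mult_scaleR mu mult.commute cong: sum.cong)
  finally show My: "M *v y = (\<Sum>b\<in>E. (mu b * (y \<bullet> b)) *\<^sub>R b)" .
  show "y \<bullet> (M *v y) = (\<Sum>b\<in>E. mu b * (y \<bullet> b)^2)"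
    unfolding My by (simp add: inner_sum_right power2_eq_square mult.assoc)
  have "y \<bullet> y = y \<bullet> (\<Sum>b\<in>E. (y \<bullet> b) *\<^sub>R b)" by (simp add: ex)
  then show "y \<bullet> y = (\<Sum>b\<in>E. (y \<bullet> b)^2)"
    by (simp add: inner_sum_right power2_eq_square)
qed

lemma sym_eigs:
  fixes M :: "real^'n^'n"
  assumes sym: "transpose M = M"
    and E: "finite E" and on: "\<And>b b'. b \<in> E \<Longrightarrow> b' \<in> E \<Longrightarrow> b \<bullet> b' = (if b = b' then 1 else 0)"
    and mu: "\<And>b. b \<in> E \<Longrightarrow> M *v b = mu b *\<^sub>R b" and ex: "\<And>x. (\<Sum>b\<in>E. (x \<bullet> b) *\<^sub>R b) = x"
  shows "eigenvalues M = mu ` E"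
proof
  show "mu ` E \<subseteq> eigenvalues M"
  proof
    fix c assume "c \<in> mu ` E"
    then obtain b where b: "b \<in> E" "c = mu b" by blast
    have "b \<noteq> 0" using on[OF b(1) b(1)] by auto
    then show "c \<in> eigenvalues M" using mu[OF b(1)] b unfolding eigenvalues_def by blast
  qed
next
  show "eigenvalues M \<subseteq> mu ` E"
  proof
    fix c assume "c \<in> eigenvalues M"
    then obtain y where y: "y \<noteq> 0" "M *v y = c *\<^sub>R y" by (auto simp: eigenvalues_def)
    have "\<exists>b\<in>E. y \<bullet> b \<noteq> 0"
    proof (rule ccontr)
      assume "\<not> ?thesis"
      then have "(\<Sum>b\<in>E. (y \<bullet> b) *\<^sub>R b) = 0" by simp
      then show False using ex[of y] y(1) by simp
    qed
    then obtain b where b: "b \<in> E" "y \<bullet> b \<noteq> 0" by blast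
    have "c * (y \<bullet> b) = (M *v y) \<bullet> b" using y(2) by simp
    also have "\<dots> = y \<bullet> (M *v b)" using sym_inner[OF sym, of y b] by simp
    also have "\<dots> = mu b * (y \<bullet> b)" using mu[OF b(1)] by simp
    finally have "c = mu b" using b(2) by simp
    then show "c \<in> mu ` E" using b(1) by blast
  qed
qed

lemma sym_rayleigh:
  fixes M :: "real^'n^'n"
  assumes sym: "transpose M = M" and ne: "eigenvalues M \<noteq> {}"
  shows "finite (eigenvalues M)"
    and "y \<bullet> (M *v y) \<le> Max (eigenvalues M) * (y \<bullet> y)"
    and "y \<bullet> (M *v y) = Max (eigenvalues M) * (y \<bullet> y) \<Longrightarrow> M *v y = Max (eigenvalues M) *\<^sub>R y"
    and "card (eigenvalues M) = 1 \<Longrightarrow> M *v y = Max (eigenvalues M) *\<^sub>R y"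
proof -
  obtain E mu where E: "finite E" and on: "\<And>b b'. b \<in> E \<Longrightarrow> b' \<in> E \<Longrightarrow> b \<bullet> b' = (if b = b' then 1 else 0)"
    and mu: "\<And>b. b \<in> E \<Longrightarrow> M *v b = mu b *\<^sub>R b" and ex: "\<And>x. (\<Sum>b\<in>E. (x \<bullet> b) *\<^sub>R b) = x"
    by (rule eigbasis[OF sym]) blast
  note eq = sym_eigs[OF sym E on mu ex]
  note xp = sym_expansions[OF E on mu ex]
  show fin: "finite (eigenvalues M)" using E eq by simp
  define lam where "lam = Max (eigenvalues M)"
  have le: "mu b \<le> lam" if "b \<in> E" for b
    unfolding lam_def using fin eq that by (intro Max_ge) auto
  have "y \<bullet> (M *v y) = (\<Sum>b\<in>E. mu b * (y \<bullet> b)^2)" by (rule xp(2))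
  also have "\<dots> \<le> (\<Sum>b\<in>E. lam * (y \<bullet> b)^2)"
    using le by (intro sum_mono mult_right_mono) auto
  also have "\<dots> = lam * (y \<bullet> y)" by (simp add: xp(3) sum_distrib_left)
  finally show "y \<bullet> (M *v y) \<le> Max (eigenvalues M) * (y \<bullet> y)" by (simp add: lam_def)
  have key: "M *v y = lam *\<^sub>R y" if h: "\<And>b. b \<in> E \<Longrightarrow> mu b * (y \<bullet> b) = lam * (y \<bullet> b)"
  proof -
    have "M *v y = (\<Sum>b\<in>E. (mu b * (y \<bullet> b)) *\<^sub>R b)" by (rule xp(1))
    also have "\<dots> = (\<Sum>b\<in>E. (lam * (y \<bullet> b)) *\<^sub>R b)" using h by (intro sum.cong) auto
    also have "\<dots> = lam *\<^sub>R (\<Sum>b\<in>E. (y \<bullet> b) *\<^sub>R b)" by (simp add: scaleR_sum_right)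
    also have "\<dots> = lam *\<^sub>R y" by (simp add: ex)
    finally show ?thesis .
  qed
  show "M *v y = Max (eigenvalues M) *\<^sub>R y" if h: "y \<bullet> (M *v y) = Max (eigenvalues M) * (y \<bullet> y)"
  proof -
    have "(\<Sum>b\<in>E. (lam - mu b) * (y \<bullet> b)^2) = lam * (y \<bullet> y) - y \<bullet> (M *v y)"
      by (simp add: xp(2) xp(3) sum_distrib_left sum_subtractf left_diff_distrib)
    also have "\<dots> = 0" using h by (simp add: lam_def)
    finally have z: "(\<Sum>b\<in>E. (lam - mu b) * (y \<bullet> b)^2) = 0" .
    have "\<forall>b\<in>E. (lam - mu b) * (y \<bullet> b)^2 = 0"
      using z E le by (subst sum_nonneg_eq_0_iff[symmetric]) auto
    then have "mu b * (y \<bullet> b) = lam * (y \<bullet> b)" if "b \<in> E" for b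
      using that by (auto simp: algebra_simps)
    then show ?thesis using key by (simp add: lam_def)
  qed
  show "M *v y = Max (eigenvalues M) *\<^sub>R y" if c1: "card (eigenvalues M) = 1"
  proof -
    obtain c where c: "eigenvalues M = {c}" using c1 card_1_singletonE by blast
    have "mu b = lam" if "b \<in> E" for b using c eq that by (auto simp: lam_def)
    then show ?thesis using key by (simp add: lam_def)
  qed
qed

lemma algU_cong: "(\<And>j. j < k \<Longrightarrow> xs j = xs' j) \<Longrightarrow> algU sel g xs k = algU sel g xs' k"
proof (induction k)
  case 0 then show ?case by simp
next
  case (Suc k)
  then have "algU sel g xs k = algU sel g xs' k" by simp
  moreover have "xs k = xs' k" using Suc.prems by simp
  ultimately show ?case by (simp add: Let_def)
qed

lemma step_meas:
  fixes sel :: "real^'n \<Rightarrow> real^'n \<Rightarrow> real"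
  assumes sel_meas: "(\<lambda>p. sel (fst p) (snd p)) \<in> borel_measurable borel"
  shows "(\<lambda>p::(real^'n) \<times> (real^'n). (1 / norm (fst p + sel (fst p) (snd p) *\<^sub>R snd p)) *\<^sub>R (fst p + sel (fst p) (snd p) *\<^sub>R snd p)) \<in> borel_measurable borel"
proof -
  have "(\<lambda>p::(real^'n) \<times> (real^'n). fst p + sel (fst p) (snd p) *\<^sub>R snd p) \<in> borel_measurable borel"
  proof -
    have f1: "(fst :: (real^'n) \<times> (real^'n) \<Rightarrow> real^'n) \<in> borel_measurable borel"
      by (intro borel_measurable_continuous_onI continuous_on_fst continuous_on_id)
    have f2: "(snd :: (real^'n) \<times> (real^'n) \<Rightarrow> real^'n) \<in> borel_measurable borel"
      by (intro borel_measurable_continuous_onI continuous_on_snd continuous_on_id)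
    show ?thesis using f1 f2 sel_meas by (intro borel_measurable_add borel_measurable_scaleR) auto
  qed
  then show ?thesis using normalize_meas by (rule measurable_compose)
qed

lemma algU_meas:
  fixes sel :: "real^'n \<Rightarrow> real^'n \<Rightarrow> real"
  assumes sel_meas: "(\<lambda>p. sel (fst p) (snd p)) \<in> borel_measurable borel"
  shows "insert None (Some ` {..<k}) \<subseteq> J \<Longrightarrow> (\<lambda>f. algU sel (f None) (\<lambda>j. f (Some j)) k) \<in> borel_measurable (PiM J (\<lambda>_. borel))"
proof (induction k)
  case 0
  then have "None \<in> J" by auto
  then have "(\<lambda>f. f None) \<in> borel_measurable (PiM J (\<lambda>_. borel::(real^'n) measure))"
    by (rule measurable_component_singleton)
  then show ?case using normalize_meas by (simp add: measurable_compose)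
next
  case (Suc k)
  have "insert None (Some ` {..<k}) \<subseteq> J" using Suc.prems by auto
  note IH = Suc.IH[OF this]
  have "Some k \<in> J" using Suc.prems by auto
  then have c: "(\<lambda>f. f (Some k)) \<in> borel_measurable (PiM J (\<lambda>_. borel::(real^'n) measure))"
    by (rule measurable_component_singleton)
  have "(\<lambda>f. (algU sel (f None) (\<lambda>j. f (Some j)) k, f (Some k))) \<in> PiM J (\<lambda>_. borel) \<rightarrow>\<^sub>M (borel \<Otimes>\<^sub>M borel)"
    using IH c by (rule measurable_Pair)
  then have "(\<lambda>f. (algU sel (f None) (\<lambda>j. f (Some j)) k, f (Some k))) \<in> PiM J (\<lambda>_. borel) \<rightarrow>\<^sub>M borel"
    by (simp add: borel_prod)
  from measurable_compose[OF this step_meas[OF sel_meas]] show ?case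
    by (simp add: Let_def)
qed

lemma subspace_ker: "subspace {z. (L::real^'n^'m) *v z = 0}"
  unfolding subspace_def by (simp add: matrix_vector_right_distrib matrix_vector_mult_scaleR)

lemma cs_span:
  fixes L :: "real^'n^'n"
  assumes nz: "L *v v \<noteq> 0"
    and eq: "(norm (L *v z))^2 * (norm (L *v v))^2 = ((L *v z) \<bullet> (L *v v))^2"
  shows "z \<in> span (insert v {z. L *v z = 0})"
proof -
  define a where "a = L *v z"
  define b where "b = L *v v"
  have "\<bar>a \<bullet> b\<bar> = sqrt ((a \<bullet> b)^2)" by simp
  also have "(a \<bullet> b)^2 = (norm a * norm b)^2" using eq by (simp add: a_def b_def power_mult_distrib)
  also have "sqrt ((norm a * norm b)^2) = norm a * norm b" by simp
  finally have "\<bar>a \<bullet> b\<bar> = norm a * norm b" .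
  then have "norm a *\<^sub>R b = norm b *\<^sub>R a \<or> norm a *\<^sub>R b = - norm b *\<^sub>R a"
    using norm_cauchy_schwarz_abs_eq by blast
  then obtain t where t: "a = t *\<^sub>R b"
  proof
    assume h: "norm a *\<^sub>R b = norm b *\<^sub>R a"
    have nb: "norm b \<noteq> 0" using nz by (simp add: b_def)
    have "a = (1 / norm b) *\<^sub>R (norm b *\<^sub>R a)" using nb by simp
    also have "\<dots> = (norm a / norm b) *\<^sub>R b" using h[symmetric] by simp
    finally have "a = (norm a / norm b) *\<^sub>R b" .
    then show thesis using that by blast
  next
    assume h: "norm a *\<^sub>R b = - norm b *\<^sub>R a"
    have nb: "norm b \<noteq> 0" using nz by (simp add: b_def)
    have "a = (- 1 / norm b) *\<^sub>R (- norm b *\<^sub>R a)" using nb by simp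
    also have "\<dots> = (- norm a / norm b) *\<^sub>R b" using h[symmetric] by simp
    finally have "a = (- norm a / norm b) *\<^sub>R b" .
    then show thesis using that by blast
  qed
  have "L *v (z - t *\<^sub>R v) = 0" using t by (simp add: a_def b_def matrix_vector_mult_diff_distrib matrix_vector_mult_scaleR)
  then have "z - t *\<^sub>R v \<in> span {z. L *v z = 0}" by (simp add: span_eq_iff[THEN iffD2, OF subspace_ker])
  then show ?thesis using span_breakdown_eq by blast
qed

lemma core:
  fixes M :: "'w measure" and g :: "'w \<Rightarrow> real^'n" and x :: "nat \<Rightarrow> 'w \<Rightarrow> real^'n"
    and sel :: "real^'n \<Rightarrow> real^'n \<Rightarrow> real" and L :: "real^'n^'n"
  assumes P: "prob_space M"
    and x_distr: "\<forall>k. distr M borel (x k) = unif_sphere"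
    and indep: "prob_space.indep_vars M (\<lambda>_. borel)
                  (\<lambda>i. case i of None \<Rightarrow> g | Some k \<Rightarrow> x k) UNIV"
    and sel_meas: "(\<lambda>p. sel (fst p) (snd p)) \<in> borel_measurable borel"
    and dL: "dim {z. L *v z = 0} + 2 \<le> CARD('n)"
  shows "AE \<omega> in M. \<not> (L *v algU sel (g \<omega>) (\<lambda>k. x k \<omega>) k \<noteq> 0 \<and>
            x k \<omega> \<in> span (insert (algU sel (g \<omega>) (\<lambda>k. x k \<omega>) k) {z. L *v z = 0}))"
proof -
  interpret prob_space M by (rule P)
  define X where "X = (\<lambda>i. case i of None \<Rightarrow> g | Some k \<Rightarrow> x k)"
  define I where "I = insert None (Some ` {..<k})"
  define V where "V \<omega> = algU sel (g \<omega>) (\<lambda>k. x k \<omega>) k" for \<omega>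
  define \<psi> where "\<psi> f = algU sel (f None) (\<lambda>j. f (Some j)) k" for f :: "nat option \<Rightarrow> real^'n"
  define W where "W = {z. L *v z = 0}"
  have ind: "indep_vars (\<lambda>_. borel) X UNIV" using indep by (simp add: X_def)
  have iv: "indep_var (PiM I (\<lambda>_. borel)) (\<lambda>\<omega>. restrict (\<lambda>i. X i \<omega>) I)
                      (PiM {Some k} (\<lambda>_. borel)) (\<lambda>\<omega>. restrict (\<lambda>i. X i \<omega>) {Some k})"
    by (rule indep_var_restrict[OF ind]) (auto simp: I_def)
  have \<psi>m: "\<psi> \<in> borel_measurable (PiM I (\<lambda>_. borel))"
    unfolding \<psi>_def by (rule algU_meas[OF sel_meas]) (simp add: I_def)
  have pm: "(\<lambda>f. f (Some k)) \<in> borel_measurable (PiM {Some k} (\<lambda>_. borel::(real^'n) measure))"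
    by (rule measurable_component_singleton) simp
  have iv2: "indep_var borel (\<psi> \<circ> (\<lambda>\<omega>. restrict (\<lambda>i. X i \<omega>) I))
                       borel ((\<lambda>f. f (Some k)) \<circ> (\<lambda>\<omega>. restrict (\<lambda>i. X i \<omega>) {Some k}))"
    by (rule indep_var_compose[OF iv \<psi>m pm])
  have e1: "\<psi> \<circ> (\<lambda>\<omega>. restrict (\<lambda>i. X i \<omega>) I) = V"
  proof
    fix \<omega>
    have "(\<psi> \<circ> (\<lambda>\<omega>. restrict (\<lambda>i. X i \<omega>) I)) \<omega> = algU sel (g \<omega>) (\<lambda>j. restrict (\<lambda>i. X i \<omega>) I (Some j)) k"
      by (simp add: \<psi>_def I_def X_def)
    also have "\<dots> = V \<omega>" unfolding V_def
      by (rule algU_cong) (simp add: I_def X_def)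
    finally show "(\<psi> \<circ> (\<lambda>\<omega>. restrict (\<lambda>i. X i \<omega>) I)) \<omega> = V \<omega>" .
  qed
  have e2: "(\<lambda>f. f (Some k)) \<circ> (\<lambda>\<omega>. restrict (\<lambda>i. X i \<omega>) {Some k}) = x k"
    by (auto simp: X_def)
  have ivV: "indep_var borel V borel (x k)" using iv2 unfolding e1 e2 .
  have rvV: "V \<in> borel_measurable M" using ivV by (rule indep_var_rv1)
  have rvx: "x k \<in> borel_measurable M" using ivV by (rule indep_var_rv2)
  have joint: "distr M borel V \<Otimes>\<^sub>M distr M borel (x k) = distr M (borel \<Otimes>\<^sub>M borel) (\<lambda>\<omega>. (V \<omega>, x k \<omega>))"
    using ivV indep_var_distribution_eq by blast
  define C where "C = {p :: (real^'n) \<times> (real^'n). L *v fst p \<noteq> 0 \<and>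
      (norm (L *v snd p))^2 * (norm (L *v fst p))^2 = ((L *v snd p) \<bullet> (L *v fst p))^2}"
  have Cb: "C \<in> sets (borel \<Otimes>\<^sub>M borel)"
  proof -
    have o: "open {p :: (real^'n) \<times> (real^'n). L *v fst p \<noteq> 0}"
      by (intro open_Collect_neq continuous_intros matrix_vector_mult_linear_continuous_on[THEN continuous_on_compose2]) auto
    have c: "closed {p :: (real^'n) \<times> (real^'n). (norm (L *v snd p))^2 * (norm (L *v fst p))^2 = ((L *v snd p) \<bullet> (L *v fst p))^2}"
      by (intro closed_Collect_eq continuous_intros matrix_vector_mult_linear_continuous_on[THEN continuous_on_compose2]) auto
    have "C = {p. L *v fst p \<noteq> 0} \<inter> {p. (norm (L *v snd p))^2 * (norm (L *v fst p))^2 = ((L *v snd p) \<bullet> (L *v fst p))^2}"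
      by (auto simp: C_def)
    then have "C \<in> sets borel" using o c by auto
    then show ?thesis by (subst borel_prod)
  qed
  have sW: "subspace W" unfolding W_def by (rule subspace_ker)
  have sec: "emeasure unif_sphere (Pair v -` C) = 0" for v
  proof (cases "L *v v = 0")
    case True
    then have "Pair v -` C = {}" by (auto simp: C_def)
    then show ?thesis by simp
  next
    case False
    let ?S = "span (insert v W)"
    have sS: "subspace ?S" by simp
    have "dim ?S \<le> dim W + 1" by (simp add: dim_span dim_insert)
    then have dS: "dim ?S < CARD('n)" using dL unfolding W_def by simp
    show ?thesis
    proof (rule unif_sphere_null[OF sS dS])
      show "Pair v -` C \<in> sets borel" using sets_Pair1[OF Cb] .
      fix y :: "real^'n" assume y: "y \<noteq> 0" "(1 / norm y) *\<^sub>R y \<in> Pair v -` C"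
      then have "(1 / norm y) *\<^sub>R y \<in> ?S" using cs_span[OF False] unfolding W_def C_def by auto
      then have "norm y *\<^sub>R ((1 / norm y) *\<^sub>R y) \<in> ?S" by (rule span_mul)
      then show "y \<in> ?S" using y(1) by simp
    qed
  qed
  have pr: "prob_space (distr M borel (x k))" using rvx by (rule prob_space_distr)
  have pair_meas: "(\<lambda>\<omega>. (V \<omega>, x k \<omega>)) \<in> M \<rightarrow>\<^sub>M borel \<Otimes>\<^sub>M borel"
    using rvV rvx by (rule measurable_Pair)
  define N where "N = (\<lambda>\<omega>. (V \<omega>, x k \<omega>)) -` C \<inter> space M"
  have Nm: "N \<in> sets M" unfolding N_def using pair_meas Cb by (rule measurable_sets)
  have "emeasure M N = emeasure (distr M (borel \<Otimes>\<^sub>M borel) (\<lambda>\<omega>. (V \<omega>, x k \<omega>))) C"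
    unfolding N_def using pair_meas Cb by (simp add: emeasure_distr)
  also have "\<dots> = emeasure (distr M borel V \<Otimes>\<^sub>M distr M borel (x k)) C" by (simp add: joint)
  also have "\<dots> = (\<integral>\<^sup>+ v. emeasure (distr M borel (x k)) (Pair v -` C) \<partial>(distr M borel V))"
  proof (rule sigma_finite_measure.emeasure_pair_measure_alt)
    show "sigma_finite_measure (distr M borel (x k))" using pr by (simp add: prob_space_imp_sigma_finite)
    show "C \<in> sets (distr M borel V \<Otimes>\<^sub>M distr M borel (x k))" using Cb by simp
  qed
  also have "\<dots> = 0" using sec x_distr by simp
  finally have "N \<in> null_sets M" using Nm by auto
  then show ?thesis
  proof (rule AE_I')
    show "{\<omega> \<in> space M. \<not> \<not> (L *v algU sel (g \<omega>) (\<lambda>k. x k \<omega>) k \<noteq> 0 \<and>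
            x k \<omega> \<in> span (insert (algU sel (g \<omega>) (\<lambda>k. x k \<omega>) k) {z. L *v z = 0}))} \<subseteq> N"
    proof
      fix \<omega> assume h: "\<omega> \<in> {\<omega> \<in> space M. \<not> \<not> (L *v algU sel (g \<omega>) (\<lambda>k. x k \<omega>) k \<noteq> 0 \<and>
            x k \<omega> \<in> span (insert (algU sel (g \<omega>) (\<lambda>k. x k \<omega>) k) {z. L *v z = 0}))}"
      then have \<omega>: "\<omega> \<in> space M" and nz: "L *v algU sel (g \<omega>) (\<lambda>k. x k \<omega>) k \<noteq> 0"
        and sp: "x k \<omega> \<in> span (insert (algU sel (g \<omega>) (\<lambda>k. x k \<omega>) k) {z. L *v z = 0})" by auto
      let ?v = "V \<omega>" and ?z = "x k \<omega>"
      obtain t where t: "?z - t *\<^sub>R ?v \<in> span W" using sp unfolding V_def W_def span_breakdown_eq by blast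
      then have "?z - t *\<^sub>R ?v \<in> W" using span_eq_iff[THEN iffD2, OF sW] by simp
      then have Lz: "L *v ?z = t *\<^sub>R (L *v ?v)"
        by (simp add: W_def matrix_vector_mult_diff_distrib matrix_vector_mult_scaleR)
      have "(norm (L *v ?z))^2 * (norm (L *v ?v))^2 = ((L *v ?z) \<bullet> (L *v ?v))^2"
      proof -
        let ?u = "L *v ?v"
        have a: "(norm (t *\<^sub>R ?u))^2 = t^2 * (norm ?u)^2" by (simp add: power_mult_distrib)
        have b: "(t *\<^sub>R ?u) \<bullet> ?u = t * (norm ?u)^2" by (simp add: dot_square_norm)
        show ?thesis unfolding Lz a b by (simp add: power_mult_distrib power2_eq_square)
      qed
      then have "(?v, ?z) \<in> C" using nz unfolding C_def V_def by simp
      then show "\<omega> \<in> N" using \<omega> unfolding N_def by simp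
    qed
  qed
qed

lemma gset_scale: "v \<in> Gset A B c \<Longrightarrow> r \<noteq> 0 \<Longrightarrow> r *\<^sub>R v \<in> Gset A B c"
  by (auto simp: Gset_def matrix_vector_mult_scaleR)

lemma gset_unscale:
  assumes "r *\<^sub>R v \<in> Gset A B c" shows "v \<in> Gset A B c"
proof -
  have r: "r \<noteq> 0" and v: "v \<noteq> 0" using assms by (auto simp: Gset_def)
  have e: "(transpose A ** A) *v (r *\<^sub>R v) = c *\<^sub>R ((transpose B ** B) *v (r *\<^sub>R v))"
    using assms by (simp add: Gset_def)
  have "(1/r) *\<^sub>R ((transpose A ** A) *v (r *\<^sub>R v)) = (1/r) *\<^sub>R (c *\<^sub>R ((transpose B ** B) *v (r *\<^sub>R v)))"
    by (simp only: e)
  then have "(transpose A ** A) *v v = c *\<^sub>R ((transpose B ** B) *v v)" using r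
    by (simp add: matrix_vector_mult_scaleR)
  then show ?thesis using v by (simp add: Gset_def)
qed

lemma ker_eq: "insert 0 (Gset A B c) = {z. (transpose A ** A - c *\<^sub>R (transpose B ** B)) *v z = 0}"
  by (auto simp: Gset_def matrix_vector_mult_diff_rdistrib scaleR_matrix_vector_assoc)

lemma rq_gset:
  assumes kerB: "\<forall>v. B *v v = 0 \<longrightarrow> v = 0" and v: "v \<in> Gset A B c"
  shows "rq A B v = c"
proof -
  have v0: "v \<noteq> 0" and e: "(transpose A ** A) *v v = c *\<^sub>R ((transpose B ** B) *v v)" using v by (auto simp: Gset_def)
  have "v \<bullet> (QQ A *v v) = (norm (A *v v))^2" by (rule QQv[OF kerB])
  then have "(norm (A *v v))^2 = v \<bullet> ((transpose A ** A) *v v)" by (simp add: QQ_def[OF kerB])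
  also have "\<dots> = c * (v \<bullet> ((transpose B ** B) *v v))" by (simp add: e)
  also have "v \<bullet> (NN B *v v) = (norm (B *v v))^2" by (rule NNv[OF kerB])
  then have "v \<bullet> ((transpose B ** B) *v v) = (norm (B *v v))^2" by (simp add: NN_def[OF kerB])
  finally have "(norm (A *v v))^2 = c * (norm (B *v v))^2" .
  moreover have "B *v v \<noteq> 0" using kerB v0 by blast
  ultimately show ?thesis by (simp add: rq_def)
qed

lemma rq_le:
  assumes kerB: "\<forall>v. B *v v = 0 \<longrightarrow> v = 0" and ne: "eigenvalues (Kmat A B) \<noteq> {}" and v0: "v \<noteq> 0"
  shows "rq A B v \<le> lambda1 A B"
proof -
  let ?y = "SS B *v v"
  have y0: "?y \<noteq> 0" using SS_inj[OF kerB] v0 by blast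
  then have pos: "?y \<bullet> ?y > 0" by simp
  have "?y \<bullet> (Kmat A B *v ?y) \<le> lambda1 A B * (?y \<bullet> ?y)"
    using sym_rayleigh(2)[OF KK_sym[OF kerB] ne] by (simp add: lambda1_def)
  then show ?thesis using pos by (simp add: rq_KK[OF kerB] divide_le_eq)
qed

lemma rq_eq:
  assumes kerB: "\<forall>v. B *v v = 0 \<longrightarrow> v = 0" and ne: "eigenvalues (Kmat A B) \<noteq> {}" and v0: "v \<noteq> 0"
    and eq: "rq A B v = lambda1 A B"
  shows "v \<in> Gset A B (lambda1 A B)"
proof -
  let ?y = "SS B *v v"
  have y0: "?y \<noteq> 0" using SS_inj[OF kerB] v0 by blast
  then have pos: "?y \<bullet> ?y > 0" by simp
  have "?y \<bullet> (Kmat A B *v ?y) = lambda1 A B * (?y \<bullet> ?y)"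
    using eq pos by (simp add: rq_KK[OF kerB] divide_eq_eq)
  then have "Kmat A B *v ?y = lambda1 A B *\<^sub>R ?y"
    using sym_rayleigh(3)[OF KK_sym[OF kerB] ne] by (simp add: lambda1_def)
  then show ?thesis using v0 by (simp add: Gset_iff[OF kerB])
qed

lemma single_eig:
  assumes kerB: "\<forall>v. B *v v = 0 \<longrightarrow> v = 0" and c1: "card (eigenvalues (Kmat A B)) = 1" and v0: "v \<noteq> 0"
  shows "v \<in> Gset A B (lambda1 A B)"
proof -
  have ne: "eigenvalues (Kmat A B) \<noteq> {}" using c1 by auto
  have "Kmat A B *v (SS B *v v) = lambda1 A B *\<^sub>R (SS B *v v)"
    using sym_rayleigh(4)[OF KK_sym[OF kerB] ne c1] by (simp add: lambda1_def)
  then show ?thesis using v0 by (simp add: Gset_iff[OF kerB])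
qed

lemma proper_eig:
  fixes A :: "real^'n^'m" and B :: "real^'n^'l"
  assumes kerB: "\<forall>v. B *v v = 0 \<longrightarrow> v = 0" and c: "c \<in> eigenvalues (Kmat A B)"
    and c': "c' \<in> eigenvalues (Kmat A B)" and ne: "c \<noteq> c'"
  shows "dim (insert 0 (Gset A B c)) < CARD('n)"
proof (rule ccontr)
  assume "\<not> ?thesis"
  moreover have "dim (insert 0 (Gset A B c)) \<le> DIM(real^'n)" by (rule dim_subset_UNIV)
  ultimately have "dim (insert 0 (Gset A B c)) = DIM(real^'n)" by simp
  then have sp: "span (insert 0 (Gset A B c)) = UNIV" using dim_eq_full by blast
  have sub: "subspace (insert 0 (Gset A B c))" unfolding ker_eq by (rule subspace_ker)
  obtain v where v: "v \<in> Gset A B c'" using c' eig_iff[OF kerB] by blast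
  then have "v \<in> span (insert 0 (Gset A B c))" using sp by simp
  then have "v \<in> insert 0 (Gset A B c)" using span_eq_iff[THEN iffD2, OF sub] by simp
  then have vc: "v \<in> Gset A B c" using v by (auto simp: Gset_def)
  have "rq A B v = c" by (rule rq_gset[OF kerB vc])
  moreover have "rq A B v = c'" by (rule rq_gset[OF kerB v])
  ultimately show False using ne by simp
qed

lemma step_nonzero:
  assumes sel_max: "is_max_selector A B sel" and v: "v \<in> sphere 0 1" and x: "x \<in> sphere 0 1"
  shows "v + sel v x *\<^sub>R x \<noteq> 0"
proof -
  from sel_max v x have h: "(if (\<exists>\<tau>. v + \<tau> *\<^sub>R x \<noteq> 0 \<and>
                 (\<forall>\<sigma>. v + \<sigma> *\<^sub>R x \<noteq> 0 \<longrightarrow> rq A B (v + \<sigma> *\<^sub>R x) \<le> rq A B (v + \<tau> *\<^sub>R x)))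
         then v + sel v x *\<^sub>R x \<noteq> 0 \<and>
              (\<forall>\<sigma>. v + \<sigma> *\<^sub>R x \<noteq> 0 \<longrightarrow> rq A B (v + \<sigma> *\<^sub>R x) \<le> rq A B (v + sel v x *\<^sub>R x))
         else sel v x = 0)"
    unfolding is_max_selector_def by blast
  have "v \<noteq> 0" using v by auto
  then show ?thesis using h by (auto split: if_splits)
qed

lemma algU_sphere:
  assumes sel_max: "is_max_selector A B sel" and g: "g \<noteq> 0" and xs: "\<forall>j. xs j \<in> sphere 0 1"
  shows "algU sel g xs k \<in> sphere 0 1"
proof (induction k)
  case 0 then show ?case using g by (simp add: norm_divide)
next
  case (Suc k)
  have "algU sel g xs k + sel (algU sel g xs k) (xs k) *\<^sub>R xs k \<noteq> 0"
    using step_nonzero[OF sel_max Suc xs[rule_format, of k]] .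
  then show ?case by (simp add: Let_def)
qed

lemma ii_det:
  fixes A :: "real^'n^'m" and B :: "real^'n^'l"
  assumes kerB: "\<forall>v. B *v v = 0 \<longrightarrow> v = 0" and ne: "eigenvalues (Kmat A B) \<noteq> {}"
    and sel_max: "is_max_selector A B sel"
    and dH: "dim (insert 0 (Gset A B (lambda1 A B))) = CARD('n) - 1" and d2: "CARD('n) \<ge> 2"
    and v: "v \<in> sphere 0 1" and x: "x \<in> sphere 0 1"
    and vH: "v \<notin> insert 0 (Gset A B (lambda1 A B))" and xH: "x \<notin> insert 0 (Gset A B (lambda1 A B))"
    and xv: "x \<notin> span {v}"
  shows "(1 / norm (v + sel v x *\<^sub>R x)) *\<^sub>R (v + sel v x *\<^sub>R x) \<in> Gset A B (lambda1 A B)"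
proof -
  define l where "l = lambda1 A B"
  define H where "H = insert 0 (Gset A B l)"
  have sub: "subspace H" unfolding H_def ker_eq by (rule subspace_ker)
  have spH: "span H = H" using sub by (simp add: span_eq_iff)
  have xH': "x \<notin> span H" using xH spH by (simp add: H_def l_def)
  have "dim (insert x H) = dim H + 1" using xH' by (simp add: dim_insert)
  also have "\<dots> = DIM(real^'n)" using dH d2 by (simp add: H_def l_def)
  finally have "span (insert x H) = UNIV" using dim_eq_full by blast
  then have "v \<in> span (insert x H)" by simp
  then obtain a where a: "v - a *\<^sub>R x \<in> span H" using span_breakdown_eq by blast
  define w0 where "w0 = v - a *\<^sub>R x"
  have w0H: "w0 \<in> H" using a spH by (simp add: w0_def)
  have v0: "v \<noteq> 0" using v by auto
  have w0nz: "w0 \<noteq> 0"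
  proof
    assume "w0 = 0"
    then have va: "v = a *\<^sub>R x" by (simp add: w0_def)
    then have "a \<noteq> 0" using v0 by auto
    then have "x = (1/a) *\<^sub>R v" using va by simp
    then have "x \<in> span {v}" by (simp add: span_base span_mul)
    then show False using xv by simp
  qed
  have w0G: "w0 \<in> Gset A B l" using w0H w0nz by (simp add: H_def)
  have rqw0: "rq A B w0 = l" by (rule rq_gset[OF kerB w0G])
  have ex: "\<exists>\<tau>. v + \<tau> *\<^sub>R x \<noteq> 0 \<and>
                 (\<forall>\<sigma>. v + \<sigma> *\<^sub>R x \<noteq> 0 \<longrightarrow> rq A B (v + \<sigma> *\<^sub>R x) \<le> rq A B (v + \<tau> *\<^sub>R x))"
  proof (intro exI conjI allI impI)
    show "v + (- a) *\<^sub>R x \<noteq> 0" using w0nz by (simp add: w0_def)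
    fix \<sigma> assume "v + \<sigma> *\<^sub>R x \<noteq> 0"
    then have "rq A B (v + \<sigma> *\<^sub>R x) \<le> l" unfolding l_def by (rule rq_le[OF kerB ne])
    also have "l = rq A B (v + (- a) *\<^sub>R x)" using rqw0 by (simp add: w0_def)
    finally show "rq A B (v + \<sigma> *\<^sub>R x) \<le> rq A B (v + (- a) *\<^sub>R x)" .
  qed
  from sel_max v x have h: "(if (\<exists>\<tau>. v + \<tau> *\<^sub>R x \<noteq> 0 \<and>
                 (\<forall>\<sigma>. v + \<sigma> *\<^sub>R x \<noteq> 0 \<longrightarrow> rq A B (v + \<sigma> *\<^sub>R x) \<le> rq A B (v + \<tau> *\<^sub>R x)))
         then v + sel v x *\<^sub>R x \<noteq> 0 \<and>
              (\<forall>\<sigma>. v + \<sigma> *\<^sub>R x \<noteq> 0 \<longrightarrow> rq A B (v + \<sigma> *\<^sub>R x) \<le> rq A B (v + sel v x *\<^sub>R x))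
         else sel v x = 0)"
    unfolding is_max_selector_def by blast
  define w where "w = v + sel v x *\<^sub>R x"
  have wnz: "w \<noteq> 0" and wmax: "\<forall>\<sigma>. v + \<sigma> *\<^sub>R x \<noteq> 0 \<longrightarrow> rq A B (v + \<sigma> *\<^sub>R x) \<le> rq A B w"
    using h ex unfolding w_def by auto
  have "l \<le> rq A B w" using wmax[rule_format, of "- a"] w0nz rqw0 by (simp add: w0_def)
  moreover have "rq A B w \<le> l" unfolding l_def by (rule rq_le[OF kerB ne wnz])
  ultimately have "rq A B w = lambda1 A B" by (simp add: l_def)
  then have "w \<in> Gset A B (lambda1 A B)" by (rule rq_eq[OF kerB ne wnz])
  then have "(1 / norm w) *\<^sub>R w \<in> Gset A B (lambda1 A B)" using wnz by (intro gset_scale) auto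
  then show ?thesis by (simp add: w_def)
qed

lemma iii_det:
  assumes v0: "v \<noteq> 0" and vG: "v \<notin> Gset A B c" and wG: "(1 / norm w) *\<^sub>R w \<in> Gset A B c"
    and w: "w = v + s *\<^sub>R x"
    and L: "L = transpose A ** A - c *\<^sub>R (transpose B ** B)"
    and core: "\<not> (L *v v \<noteq> 0 \<and> x \<in> span (insert v {z. L *v z = 0}))"
  shows False
proof -
  have ker: "{z. L *v z = 0} = insert 0 (Gset A B c)" using ker_eq[of A B c] L by simp
  have sub: "subspace {z. L *v z = 0}" by (rule subspace_ker)
  have "L *v v \<noteq> 0" using v0 vG ker by blast
  then have nx: "x \<notin> span (insert v {z. L *v z = 0})" using core by blast
  have wG': "w \<in> Gset A B c" using gset_unscale[OF wG] .
  have s0: "s \<noteq> 0" using wG' vG w by auto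
  have "(1/s) *\<^sub>R w \<in> Gset A B c" using wG' s0 by (intro gset_scale) auto
  then have "(1/s) *\<^sub>R w \<in> {z. L *v z = 0}" using ker by simp
  moreover have "x - (- (1/s)) *\<^sub>R v = (1/s) *\<^sub>R w" using s0 w by (simp add: algebra_simps)
  ultimately have "x - (- (1/s)) *\<^sub>R v \<in> span {z. L *v z = 0}" by (simp add: span_base)
  then have "x \<in> span (insert v {z. L *v z = 0})" using span_breakdown_eq by blast
  then show False using nx by simp
qed

theorem mainTheorem5:
  fixes A :: "real^'n^'m" and B :: "real^'n^'l"
    and M :: "'w measure"
    and g :: "'w \<Rightarrow> real^'n" and x :: "nat \<Rightarrow> 'w \<Rightarrow> real^'n"
    and sel :: "real^'n \<Rightarrow> real^'n \<Rightarrow> real"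
  assumes d2: "CARD('n) \<ge> 2"
    and kerB: "\<forall>v. B *v v = 0 \<longrightarrow> v = 0"
    and P: "prob_space M"
    and g_distr: "distr M borel g = std_gauss"
    and x_distr: "\<forall>k. distr M borel (x k) = unif_sphere"
    and indep: "prob_space.indep_vars M (\<lambda>_. borel)
                  (\<lambda>i. case i of None \<Rightarrow> g | Some k \<Rightarrow> x k) UNIV"
    and sel_max: "is_max_selector A B sel"
    and sel_meas: "(\<lambda>p. sel (fst p) (snd p)) \<in> borel_measurable borel"
  shows
    "(card (eigenvalues (Kmat A B)) \<ge> 2 \<longrightarrow>
        (AE \<omega> in M. \<not> gen_eigvec A B (algU sel (g \<omega>) (\<lambda>k. x k \<omega>) 0))
      \<and> (dimG A B (lambda1 A B) = CARD('n) - 1 \<longrightarrow>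
           (AE \<omega> in M. algU sel (g \<omega>) (\<lambda>k. x k \<omega>) 1 \<in> Gset A B (lambda1 A B)))
      \<and> (\<forall>k c. c \<in> eigenvalues (Kmat A B) \<and> dimG A B c < CARD('n) - 1 \<longrightarrow>
           (AE \<omega> in M. \<not> (algU sel (g \<omega>) (\<lambda>k. x k \<omega>) k \<notin> Gset A B c
                          \<and> algU sel (g \<omega>) (\<lambda>k. x k \<omega>) (Suc k) \<in> Gset A B c))))
   \<and> (card (eigenvalues (Kmat A B)) = 1 \<longrightarrow>
        (AE \<omega> in M. algU sel (g \<omega>) (\<lambda>k. x k \<omega>) 0 \<in> Gset A B (lambda1 A B)))"
proof -
  interpret prob_space M by (rule P)
  have rv: "random_variable borel (case i of None \<Rightarrow> g | Some k \<Rightarrow> x k)" for i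
    using indep unfolding indep_vars_def by blast
  have gm: "g \<in> borel_measurable M" using rv[of None] by simp
  have xm: "x k \<in> borel_measurable M" for k using rv[of "Some k"] by simp
  have gnull: "AE \<omega> in M. g \<omega> \<notin> W" if W: "subspace W" "dim W < CARD('n)" for W
  proof (rule AE_I')
    have Wb: "W \<in> sets borel" using closed_subspace[OF W(1)] by simp
    have "emeasure M (g -` W \<inter> space M) = emeasure (distr M borel g) W"
      using gm Wb by (simp add: emeasure_distr)
    also have "\<dots> = 0" using g_distr std_gauss_null[OF W] by simp
    finally show "g -` W \<inter> space M \<in> null_sets M" using measurable_sets[OF gm Wb] by auto
  qed auto
  have xnull: "AE \<omega> in M. x k \<omega> \<notin> W" if W: "subspace W" "dim W < CARD('n)" for W k
  proof (rule AE_I')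
    have Wb: "W \<in> sets borel" using closed_subspace[OF W(1)] by simp
    have "emeasure M (x k -` W \<inter> space M) = emeasure (distr M borel (x k)) W"
      using xm Wb by (simp add: emeasure_distr)
    also have "\<dots> = emeasure unif_sphere W" using x_distr by simp
    also have "\<dots> = 0"
    proof (rule unif_sphere_null[OF W Wb])
      fix y :: "real^'n" assume y: "y \<noteq> 0" "(1 / norm y) *\<^sub>R y \<in> W"
      have "norm y *\<^sub>R ((1 / norm y) *\<^sub>R y) \<in> W" by (rule subspace_scale[OF W(1) y(2)])
      then show "y \<in> W" using y(1) by simp
    qed
    finally show "x k -` W \<inter> space M \<in> null_sets M" using measurable_sets[OF xm Wb] by auto
  qed auto
  have sub0: "subspace {0::real^'n}" by (simp add: subspace_0 subspace_def)
  have g0: "AE \<omega> in M. g \<omega> \<noteq> 0" using gnull[OF sub0] d2 by simp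
  have xsph: "AE \<omega> in M. x k \<omega> \<in> sphere 0 1" for k
  proof (rule AE_I')
    have Cb: "- sphere (0::real^'n) 1 \<in> sets borel" by (intro borel_open open_Compl closed_sphere)
    have "emeasure M (x k -` (- sphere 0 1) \<inter> space M) = emeasure (distr M borel (x k)) (- sphere 0 1)"
      using xm Cb by (simp add: emeasure_distr)
    also have "\<dots> = emeasure (unif_sphere :: (real^'n) measure) (- sphere 0 1)" using x_distr by simp
    also have "\<dots> = 0"
      by (rule unif_sphere_null[OF sub0 _ Cb]) (use d2 in \<open>auto simp: norm_divide\<close>)
    finally show "x k -` (- sphere 0 1) \<inter> space M \<in> null_sets M" using measurable_sets[OF xm Cb] by auto
  qed auto
  have allsph: "AE \<omega> in M. \<forall>j. x j \<omega> \<in> sphere 0 1"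
    using xsph by (simp add: AE_all_countable)
  define K where "K = Kmat A B"
  show ?thesis
  proof (intro conjI impI)
    assume c2: "card (eigenvalues (Kmat A B)) \<ge> 2"
    have fin: "finite (eigenvalues K)" using c2 card.infinite unfolding K_def by fastforce
    have ne: "eigenvalues K \<noteq> {}" using c2 unfolding K_def by auto
    have other: "\<exists>c'\<in>eigenvalues K. c' \<noteq> c" for c
    proof (rule ccontr)
      assume "\<not> ?thesis"
      then have "eigenvalues K \<subseteq> {c}" by auto
      then have "card (eigenvalues K) \<le> 1" using card_mono[of "{c}"] by fastforce
      then show False using c2 unfolding K_def by simp
    qed
    have propc: "dim (insert 0 (Gset A B c)) < CARD('n)" if c: "c \<in> eigenvalues K" for c
    proof -
      obtain c' where "c' \<in> eigenvalues K" "c' \<noteq> c" using other by blast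
      then show ?thesis using proper_eig[OF kerB, of c A c'] c unfolding K_def by auto
    qed
    have subG: "subspace (insert 0 (Gset A B c))" for c unfolding ker_eq by (rule subspace_ker)
    have "\<forall>c\<in>eigenvalues K. AE \<omega> in M. g \<omega> \<notin> insert 0 (Gset A B c)"
      using gnull[OF subG propc] by blast
    then have allc: "AE \<omega> in M. \<forall>c\<in>eigenvalues K. g \<omega> \<notin> insert 0 (Gset A B c)"
      using fin by (simp add: AE_finite_all)
    show "AE \<omega> in M. \<not> gen_eigvec A B (algU sel (g \<omega>) (\<lambda>k. x k \<omega>) 0)"
      using allc
    proof eventually_elim
      case (elim \<omega>)
      show ?case
      proof
        assume "gen_eigvec A B (algU sel (g \<omega>) (\<lambda>k. x k \<omega>) 0)"
        then obtain c where c: "(1 / norm (g \<omega>)) *\<^sub>R g \<omega> \<in> Gset A B c" by (auto simp: gen_eigvec_def)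
        then have "g \<omega> \<in> Gset A B c" by (rule gset_unscale)
        moreover then have "c \<in> eigenvalues K" unfolding K_def using eig_iff[OF kerB] by blast
        ultimately show False using elim by blast
      qed
    qed
    show "AE \<omega> in M. algU sel (g \<omega>) (\<lambda>k. x k \<omega>) 1 \<in> Gset A B (lambda1 A B)"
      if dH: "dimG A B (lambda1 A B) = CARD('n) - 1"
    proof -
      let ?H = "insert 0 (Gset A B (lambda1 A B))"
      have dH': "dim ?H = CARD('n) - 1" using dH by (simp add: dimG_def)
      have dHl: "dim ?H < CARD('n)" using dH' d2 by simp
      have a1: "AE \<omega> in M. g \<omega> \<notin> ?H" by (rule gnull[OF subG dHl])
      have a2: "AE \<omega> in M. x 0 \<omega> \<notin> ?H" by (rule xnull[OF subG dHl])
      have ker1: "{z::real^'n. mat 1 *v z = 0} = {0}" by auto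
      have a3: "AE \<omega> in M. \<not> (mat 1 *v algU sel (g \<omega>) (\<lambda>k. x k \<omega>) 0 \<noteq> 0 \<and>
            x 0 \<omega> \<in> span (insert (algU sel (g \<omega>) (\<lambda>k. x k \<omega>) 0) {z. mat 1 *v z = 0}))"
        by (rule core[OF P x_distr indep sel_meas]) (use d2 in \<open>simp add: ker1\<close>)
      show ?thesis using a1 a2 a3 g0 xsph[of 0]
      proof eventually_elim
        case (elim \<omega>)
        let ?v = "(1 / norm (g \<omega>)) *\<^sub>R g \<omega>"
        have vs: "?v \<in> sphere 0 1" using elim by (simp add: norm_divide)
        have vH: "?v \<notin> ?H"
        proof
          assume vin: "?v \<in> ?H"
          have "?v \<noteq> 0" using elim by simp
          then have "?v \<in> Gset A B (lambda1 A B)" using vin by simp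
          then have "g \<omega> \<in> Gset A B (lambda1 A B)" by (rule gset_unscale)
          then show False using elim by simp
        qed
        have xv: "x 0 \<omega> \<notin> span {?v}"
          using elim by (simp add: ker1 insert_commute[of _ 0] span_insert_0)
        have "(1 / norm (?v + sel ?v (x 0 \<omega>) *\<^sub>R x 0 \<omega>)) *\<^sub>R (?v + sel ?v (x 0 \<omega>) *\<^sub>R x 0 \<omega>)
              \<in> Gset A B (lambda1 A B)"
          by (rule ii_det[OF kerB ne[unfolded K_def] sel_max dH' d2 vs]) (use elim xv vH in auto)
        then show ?case by (simp add: Let_def)
      qed
    qed
    show "\<forall>k c. c \<in> eigenvalues (Kmat A B) \<and> dimG A B c < CARD('n) - 1 \<longrightarrow>
           (AE \<omega> in M. \<not> (algU sel (g \<omega>) (\<lambda>k. x k \<omega>) k \<notin> Gset A B c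
                          \<and> algU sel (g \<omega>) (\<lambda>k. x k \<omega>) (Suc k) \<in> Gset A B c))"
    proof (intro allI impI)
      fix k c assume kc: "c \<in> eigenvalues (Kmat A B) \<and> dimG A B c < CARD('n) - 1"
      define L where "L = transpose A ** A - c *\<^sub>R (transpose B ** B)"
      have kerL: "{z. L *v z = 0} = insert 0 (Gset A B c)" using ker_eq[of A B c] by (simp add: L_def)
      have dL: "dim {z. L *v z = 0} + 2 \<le> CARD('n)" using kc d2 unfolding kerL dimG_def by linarith
      have a: "AE \<omega> in M. \<not> (L *v algU sel (g \<omega>) (\<lambda>k. x k \<omega>) k \<noteq> 0 \<and>
            x k \<omega> \<in> span (insert (algU sel (g \<omega>) (\<lambda>k. x k \<omega>) k) {z. L *v z = 0}))"
        by (rule core[OF P x_distr indep sel_meas dL])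
      show "AE \<omega> in M. \<not> (algU sel (g \<omega>) (\<lambda>k. x k \<omega>) k \<notin> Gset A B c
                          \<and> algU sel (g \<omega>) (\<lambda>k. x k \<omega>) (Suc k) \<in> Gset A B c)"
        using a g0 allsph
      proof eventually_elim
        case (elim \<omega>)
        let ?v = "algU sel (g \<omega>) (\<lambda>k. x k \<omega>) k"
        have "?v \<in> sphere 0 1" using algU_sphere[OF sel_max, of "g \<omega>" "\<lambda>j. x j \<omega>" k] elim by simp
        then have v0: "?v \<noteq> 0" by auto
        show ?case
        proof
          assume h: "?v \<notin> Gset A B c \<and> algU sel (g \<omega>) (\<lambda>k. x k \<omega>) (Suc k) \<in> Gset A B c"
          show False
            by (rule iii_det[OF v0 _ _ refl L_def]) (use h elim in \<open>auto simp: Let_def\<close>)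
        qed
      qed
    qed
  next
    assume c1: "card (eigenvalues (Kmat A B)) = 1"
    show "AE \<omega> in M. algU sel (g \<omega>) (\<lambda>k. x k \<omega>) 0 \<in> Gset A B (lambda1 A B)"
      using g0
    proof eventually_elim
      case (elim \<omega>)
      then have "(1 / norm (g \<omega>)) *\<^sub>R g \<omega> \<noteq> 0" by simp
      then show ?case using single_eig[OF kerB c1] by simp
    qed
  qed
qed

end
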